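(* Let $Q\subset\mathbb{R}^n$ and $Q'\subset\mathbb{R}^m$ be the polytopes associated with smooth toric Fano manifolds $V_1$ and $V_2$. Let $P=\mathrm{Conv}(Q,Q')\subset\mathbb{R}^{n+m}$ be the convex hull of $(Q\times\{0\})\cup(\{0\}\times Q')$, which is the polytope associated with $V_1\times V_2$. Then all critical points of $W_P$ in $(\mathbb{C}^* )^{n+m}$ are non-degenerate if and only if all critical points of $W_Q$ in $(\mathbb{C}^* )^n$ and all critical points of $W_{Q'}$ in $(\mathbb{C}^* )^m$ are non-degenerate.
   Context: The polytope associated with a smooth toric Fano manifold is the polar dual of its moment polytope. It is a lattice polytope with vertices in $\mathbb{Z}^n$ and the origin in its interior. For a lattice polytope $R\subset\mathbb{R}^n$, the superpotential is the Laurent polynomial $W_R(x)=\sum_{v\in\mathrm{vert}(R)}x^v$, where $x^v=x_1^{v_1}\cdots x_n^{v_n}$, defined on $(\mathbb{C}^* )^n$. A critical point of $W_R$ is a point of $(\mathbb{C}^* )^n$ where all partial derivatives $\partial W_R/\partial x_k$ vanish. It is non-degenerate if the Hessian matrix $(\partial^2W_R/\partial x_j\partial x_k)$ is invertible there. *)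

theory Defs
  imports "HOL-Analysis.Analysis"
begin

definition lat :: "int^'n \<Rightarrow> real^'n" where
  "lat k = (\<chi> i. of_int (k $ i))"

text \<open>Polytope associated with a smooth toric Fano manifold (smooth Fano polytope):
  a polytope with lattice vertices, the origin in its interior, and such that the
  vertices of every facet form a Z-basis of Z^n.\<close>
definition smooth_fano_polytope :: "(real^'n) set \<Rightarrow> bool" where
  "smooth_fano_polytope P \<longleftrightarrow>
     polytope P \<and> 0 \<in> interior P \<and>
     (\<forall>v. v extreme_point_of P \<longrightarrow> v \<in> range lat) \<and>
     (\<forall>F. F facet_of P \<longrightarrow>
        (\<exists>b :: 'n \<Rightarrow> int^'n. bij_betw (\<lambda>i. lat (b i)) UNIV {v. v extreme_point_of F}
                              \<and> \<bar>det (\<chi> i. b i)\<bar> = 1))"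

text \<open>Conv(Q,Q'): convex hull of (Q x {0}) \<union> ({0} x Q') in R^(n+m), coordinates indexed by 'n + 'm.\<close>
definition inl_vec :: "real^'n::finite \<Rightarrow> real^('n::finite + 'm::finite)" where
  "inl_vec x = (\<chi> i. case i of Inl a \<Rightarrow> x $ a | Inr _ \<Rightarrow> 0)"

definition inr_vec :: "real^'m::finite \<Rightarrow> real^('n::finite + 'm::finite)" where
  "inr_vec y = (\<chi> i. case i of Inl _ \<Rightarrow> 0 | Inr b \<Rightarrow> y $ b)"

definition conv_join :: "(real^'n) set \<Rightarrow> (real^'m) set \<Rightarrow> (real^('n + 'm)) set" where
  "conv_join Q Q' = convex hull (inl_vec ` Q \<union> inr_vec ` Q')"

definition superpotential :: "(real^'n) set \<Rightarrow> complex^'n \<Rightarrow> complex" where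
  "superpotential R x = (\<Sum>k \<in> {k. lat k extreme_point_of R}. \<Prod>i\<in>UNIV. (x $ i) powi (k $ i))"

definition torus :: "(complex^'n) set" where
  "torus = {x. \<forall>i. x $ i \<noteq> 0}"

definition partial :: "'n \<Rightarrow> (complex^'n \<Rightarrow> complex) \<Rightarrow> complex^'n \<Rightarrow> complex" where
  "partial j f x = deriv (\<lambda>t. f (\<chi> i. if i = j then t else x $ i)) (x $ j)"

definition critical_point :: "(complex^'n \<Rightarrow> complex) \<Rightarrow> complex^'n \<Rightarrow> bool" where
  "critical_point f x \<longleftrightarrow> x \<in> torus \<and> (\<forall>j. partial j f x = 0)"

definition hessian :: "(complex^'n \<Rightarrow> complex) \<Rightarrow> complex^'n \<Rightarrow> complex^'n^'n" where
  "hessian f x = (\<chi> j k. partial j (partial k f) x)"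

definition nondegenerate_critical_point :: "(complex^'n \<Rightarrow> complex) \<Rightarrow> complex^'n \<Rightarrow> bool" where
  "nondegenerate_critical_point f x \<longleftrightarrow> critical_point f x \<and> invertible (hessian f x)"

end

theory Submission
  imports Defs
begin


lemma ext_join_fwd:
  fixes L :: "'a::euclidean_space \<Rightarrow> 'c::euclidean_space" and R :: "'b::euclidean_space \<Rightarrow> 'c"
    and pL :: "'c \<Rightarrow> 'a" and pR :: "'c \<Rightarrow> 'b"
  assumes lin: "linear L" "linear R" "linear pL" "linear pR"
    and pr: "\<And>x. pL (L x) = x" "\<And>y. pL (R y) = 0" "\<And>y. pR (R y) = y" "\<And>x. pR (L x) = 0"
    and cQ: "convex Q" "convex Q'" and z: "0 \<in> Q" "0 \<in> Q'" and nz: "\<not> 0 extreme_point_of Q"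
    and q: "q extreme_point_of Q"
  shows "L q extreme_point_of convex hull (L ` Q \<union> R ` Q')"
proof -
  have qQ: "q \<in> Q" using q by (simp add: extreme_point_of_def)
  have q0: "q \<noteq> 0" using q nz by auto
  have H: "convex hull (L ` Q \<union> R ` Q') =
    {u *\<^sub>R s + v *\<^sub>R t | u v s t. u \<ge> 0 \<and> v \<ge> 0 \<and> u + v = 1 \<and> s \<in> L ` Q \<and> t \<in> R ` Q'}"
    apply (rule convex_hull_union_two)
    using cQ z lin by (auto intro: convex_linear_image)
  have key: "u = 1 \<and> a = q" if "u \<ge> 0" "v \<ge> 0" "u + v = 1" "a \<in> Q" "u *\<^sub>R a = q" for u v a
  proof -
    have "v = 0"
    proof (rule ccontr)
      assume "v \<noteq> 0"
      then have v: "v > 0" using that by simp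
      have "u \<noteq> 0" using q0 that by auto
      then have u: "u > 0" using that by simp
      have "a \<noteq> 0" using q0 that by auto
      have "q \<in> open_segment 0 a"
        unfolding in_segment using \<open>a \<noteq> 0\<close> u v that by (intro conjI exI[of _ u]) auto
      then show False using q z that unfolding extreme_point_of_def by blast
    qed
    then show ?thesis using that by auto
  qed
  show ?thesis
    unfolding extreme_point_of_def
  proof (intro conjI ballI)
    show "L q \<in> convex hull (L ` Q \<union> R ` Q')" using qQ by (intro hull_inc) auto
  next
    fix a b assume a: "a \<in> convex hull (L ` Q \<union> R ` Q')" and b: "b \<in> convex hull (L ` Q \<union> R ` Q')"
    show "L q \<notin> open_segment a b"
    proof
      assume "L q \<in> open_segment a b"
      then obtain w where ab: "a \<noteq> b" and w: "0 < w" "w < 1" and eq: "L q = (1 - w) *\<^sub>R a + w *\<^sub>R b"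
        unfolding in_segment by blast
      obtain u1 v1 a1 b1 where A: "u1 \<ge> 0" "v1 \<ge> 0" "u1 + v1 = 1" "a1 \<in> Q" "b1 \<in> Q'"
        "a = u1 *\<^sub>R L a1 + v1 *\<^sub>R R b1" using a unfolding H by blast
      obtain u2 v2 a2 b2 where B: "u2 \<ge> 0" "v2 \<ge> 0" "u2 + v2 = 1" "a2 \<in> Q" "b2 \<in> Q'"
        "b = u2 *\<^sub>R L a2 + v2 *\<^sub>R R b2" using b unfolding H by blast
      have "pL (L q) = (1 - w) *\<^sub>R pL a + w *\<^sub>R pL b"
        using eq lin by (simp add: linear_add linear_scale)
      also have "pL a = u1 *\<^sub>R a1" using A lin pr by (simp add: linear_add linear_scale)
      also have "pL b = u2 *\<^sub>R a2" using B lin pr by (simp add: linear_add linear_scale)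
      finally have qe: "q = (1 - w) *\<^sub>R (u1 *\<^sub>R a1) + w *\<^sub>R (u2 *\<^sub>R a2)" using pr by simp
      have c1: "u1 *\<^sub>R a1 \<in> Q"
        using convexD[OF cQ(1) A(4) z(1) A(1) A(2) A(3)] by simp
      have c2: "u2 *\<^sub>R a2 \<in> Q"
        using convexD[OF cQ(1) B(4) z(1) B(1) B(2) B(3)] by simp
      have ceq: "u1 *\<^sub>R a1 = u2 *\<^sub>R a2"
      proof (rule ccontr)
        assume ne: "u1 *\<^sub>R a1 \<noteq> u2 *\<^sub>R a2"
        have "q \<in> open_segment (u1 *\<^sub>R a1) (u2 *\<^sub>R a2)"
          unfolding in_segment using ne w qe by blast
        then show False using q c1 c2 unfolding extreme_point_of_def by blast
      qed
      have "u1 *\<^sub>R a1 = q" using qe ceq by (simp add: algebra_simps)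
      then have k1: "u1 = 1 \<and> a1 = q" using key A by blast
      have "u2 *\<^sub>R a2 = q" using qe ceq by (simp add: algebra_simps)
      then have k2: "u2 = 1 \<and> a2 = q" using key B by blast
      have "a = L q" using A k1 by simp
      moreover have "b = L q" using B k2 by simp
      ultimately show False using ab by simp
    qed
  qed
qed

lemma ext_join_bwd:
  fixes L :: "'a::euclidean_space \<Rightarrow> 'c::euclidean_space"
  assumes "linear L" "inj L" "q \<in> Q" "L q extreme_point_of P" "L ` Q \<subseteq> P"
  shows "q extreme_point_of Q"
  unfolding extreme_point_of_def
proof (intro conjI ballI)
  show "q \<in> Q" by fact
  fix a b assume "a \<in> Q" "b \<in> Q"
  show "q \<notin> open_segment a b"
  proof
    assume "q \<in> open_segment a b"
    then have "L q \<in> open_segment (L a) (L b)"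
      using open_segment_linear_image[OF assms(1,2)] by blast
    then show False using assms \<open>a \<in> Q\<close> \<open>b \<in> Q\<close> unfolding extreme_point_of_def by blast
  qed
qed



definition pLv :: "real^('n::finite + 'm::finite) \<Rightarrow> real^'n" where "pLv x = (\<chi> a. x $ Inl a)"
definition pRv :: "real^('n::finite + 'm::finite) \<Rightarrow> real^'m" where "pRv x = (\<chi> a. x $ Inr a)"
definition inlk :: "int^'n::finite \<Rightarrow> int^('n + 'm::finite)" where
  "inlk k = (\<chi> i. case i of Inl a \<Rightarrow> k $ a | Inr _ \<Rightarrow> 0)"
definition inrk :: "int^'m::finite \<Rightarrow> int^('n::finite + 'm)" where
  "inrk k = (\<chi> i. case i of Inl _ \<Rightarrow> 0 | Inr b \<Rightarrow> k $ b)"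

lemma lin_inl: "linear (inl_vec :: real^'n::finite \<Rightarrow> real^('n + 'm::finite))"
  by (rule linearI) (auto simp: inl_vec_def vec_eq_iff split: sum.splits)
lemma lin_inr: "linear (inr_vec :: real^'m::finite \<Rightarrow> real^('n::finite + 'm))"
  by (rule linearI) (auto simp: inr_vec_def vec_eq_iff split: sum.splits)
lemma lin_pL: "linear (pLv :: real^('n::finite + 'm::finite) \<Rightarrow> real^'n)"
  by (rule linearI) (auto simp: pLv_def vec_eq_iff)
lemma lin_pR: "linear (pRv :: real^('n::finite + 'm::finite) \<Rightarrow> real^'m)"
  by (rule linearI) (auto simp: pRv_def vec_eq_iff)
lemma pr_simps [simp]:
  "pLv (inl_vec x :: real^('n::finite + 'm::finite)) = x"
  "pLv (inr_vec y :: real^('n::finite + 'm::finite)) = 0"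
  "pRv (inr_vec y :: real^('n::finite + 'm::finite)) = y"
  "pRv (inl_vec x :: real^('n::finite + 'm::finite)) = 0"
  by (auto simp: pLv_def pRv_def inl_vec_def inr_vec_def vec_eq_iff)
lemma inj_inl: "inj (inl_vec :: real^'n::finite \<Rightarrow> real^('n + 'm::finite))"
  by (metis injI pr_simps(1))
lemma inj_inr: "inj (inr_vec :: real^'m::finite \<Rightarrow> real^('n::finite + 'm))"
  by (metis injI pr_simps(3))

lemma sfp_facts:
  assumes "smooth_fano_polytope (Q :: (real^'n) set)"
  shows "convex Q" "0 \<in> Q" "\<not> 0 extreme_point_of Q" "polytope Q" "0 \<in> interior Q"
    "\<And>v. v extreme_point_of Q \<Longrightarrow> v \<in> range lat"
  using assms unfolding smooth_fano_polytope_def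
  by (auto simp: polytope_imp_convex dest: interior_subset[THEN subsetD] extreme_point_not_in_interior)

lemma ext_P:
  fixes Q :: "(real^'n) set" and Q' :: "(real^'m) set"
  assumes "smooth_fano_polytope Q" "smooth_fano_polytope Q'"
  shows "z extreme_point_of conv_join Q Q' \<longleftrightarrow>
    (\<exists>q. q extreme_point_of Q \<and> z = inl_vec q) \<or> (\<exists>q. q extreme_point_of Q' \<and> z = inr_vec q)"
proof
  note f1 = sfp_facts[OF assms(1)] and f2 = sfp_facts[OF assms(2)]
  assume z: "z extreme_point_of conv_join Q Q'"
  then have "z \<in> inl_vec ` Q \<union> inr_vec ` Q'"
    unfolding conv_join_def by (rule extreme_point_of_convex_hull)
  then show "(\<exists>q. q extreme_point_of Q \<and> z = inl_vec q) \<or> (\<exists>q. q extreme_point_of Q' \<and> z = inr_vec q)"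
  proof
    assume "z \<in> inl_vec ` Q"
    then obtain q where "q \<in> Q" "z = inl_vec q" by auto
    moreover have "q extreme_point_of Q"
      using ext_join_bwd[OF lin_inl inj_inl \<open>q \<in> Q\<close>, of "conv_join Q Q'"] z \<open>z = inl_vec q\<close>
      unfolding conv_join_def by (auto intro: hull_inc)
    ultimately show ?thesis by blast
  next
    assume "z \<in> inr_vec ` Q'"
    then obtain q where "q \<in> Q'" "z = inr_vec q" by auto
    moreover have "q extreme_point_of Q'"
      using ext_join_bwd[OF lin_inr inj_inr \<open>q \<in> Q'\<close>, of "conv_join Q Q'"] z \<open>z = inr_vec q\<close>
      unfolding conv_join_def by (auto intro: hull_inc)
    ultimately show ?thesis by blast
  qed
next
  note f1 = sfp_facts[OF assms(1)] and f2 = sfp_facts[OF assms(2)]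
  assume "(\<exists>q. q extreme_point_of Q \<and> z = inl_vec q) \<or> (\<exists>q. q extreme_point_of Q' \<and> z = inr_vec q)"
  then show "z extreme_point_of conv_join Q Q'"
  proof (elim disjE exE conjE)
    fix q assume "q extreme_point_of Q" "z = inl_vec q"
    then show ?thesis unfolding conv_join_def
      using ext_join_fwd[OF lin_inl lin_inr lin_pL lin_pR pr_simps f1(1) f2(1) f1(2) f2(2) f1(3)]
      by blast
  next
    fix q assume "q extreme_point_of Q'" "z = inr_vec q"
    then show ?thesis unfolding conv_join_def
      using ext_join_fwd[OF lin_inr lin_inl lin_pR lin_pL pr_simps(3,4,1,2) f2(1) f1(1) f2(2) f1(2) f2(3)]
      by (simp add: Un_commute)
  qed
qed

lemma lat_inj: "lat k = lat k' \<longleftrightarrow> k = k'"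
  by (auto simp: lat_def vec_eq_iff)
lemma lat_inlk: "lat (inlk k :: int^('n::finite + 'm::finite)) = inl_vec (lat k)"
  by (auto simp: lat_def inlk_def inl_vec_def vec_eq_iff split: sum.splits)
lemma lat_inrk: "lat (inrk k :: int^('n::finite + 'm::finite)) = inr_vec (lat k)"
  by (auto simp: lat_def inrk_def inr_vec_def vec_eq_iff split: sum.splits)
lemma inj_inlk: "inj (inlk :: int^'n::finite \<Rightarrow> int^('n + 'm::finite))"
  by (rule injI) (metis lat_inlk lat_inj inj_inl injD)
lemma inj_inrk: "inj (inrk :: int^'m::finite \<Rightarrow> int^('n::finite + 'm))"
  by (rule injI) (metis lat_inrk lat_inj inj_inr injD)

lemma Kset_P:
  fixes Q :: "(real^'n) set" and Q' :: "(real^'m) set"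
  assumes "smooth_fano_polytope Q" "smooth_fano_polytope Q'"
  shows "{k. lat k extreme_point_of conv_join Q Q'} =
     inlk ` {k. lat k extreme_point_of Q} \<union> inrk ` {k. lat k extreme_point_of Q'}"
proof (intro equalityI subsetI)
  note f1 = sfp_facts[OF assms(1)] and f2 = sfp_facts[OF assms(2)]
  fix k assume "k \<in> {k. lat k extreme_point_of conv_join Q Q'}"
  then have "(\<exists>q. q extreme_point_of Q \<and> lat k = inl_vec q) \<or> (\<exists>q. q extreme_point_of Q' \<and> lat k = inr_vec q)"
    using ext_P[OF assms] by auto
  then show "k \<in> inlk ` {k. lat k extreme_point_of Q} \<union> inrk ` {k. lat k extreme_point_of Q'}"
  proof (elim disjE exE conjE)
    fix q assume q: "q extreme_point_of Q" "lat k = inl_vec q"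
    then obtain k1 where "q = lat k1" using f1(6) by blast
    then have "k = inlk k1" using q by (metis lat_inlk lat_inj)
    then show ?thesis using q \<open>q = lat k1\<close> by auto
  next
    fix q assume q: "q extreme_point_of Q'" "lat k = inr_vec q"
    then obtain k1 where "q = lat k1" using f2(6) by blast
    then have "k = inrk k1" using q by (metis lat_inrk lat_inj)
    then show ?thesis using q \<open>q = lat k1\<close> by auto
  qed
next
  fix k assume "k \<in> inlk ` {k. lat k extreme_point_of Q} \<union> inrk ` {k. lat k extreme_point_of Q'}"
  then show "k \<in> {k. lat k extreme_point_of conv_join Q Q'}"
    using ext_P[OF assms] by (auto simp: lat_inlk lat_inrk)
qed



definition pLc :: "complex^('n::finite + 'm::finite) \<Rightarrow> complex^'n" where "pLc x = (\<chi> a. x $ Inl a)"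
definition pRc :: "complex^('n::finite + 'm::finite) \<Rightarrow> complex^'m" where "pRc x = (\<chi> a. x $ Inr a)"
definition joinc :: "complex^'n::finite \<Rightarrow> complex^'m::finite \<Rightarrow> complex^('n + 'm)" where
  "joinc y z = (\<chi> i. case i of Inl a \<Rightarrow> y $ a | Inr b \<Rightarrow> z $ b)"

lemma joinc_simps [simp]: "pLc (joinc y z) = y" "pRc (joinc y z) = z"
  by (auto simp: pLc_def pRc_def joinc_def vec_eq_iff)
lemma joinc_eta: "joinc (pLc x) (pRc x) = x"
  by (auto simp: pLc_def pRc_def joinc_def vec_eq_iff split: sum.splits)

lemma deriv_add_const: "deriv (\<lambda>t. g t + c) z = deriv g z"
proof -
  have "((\<lambda>t. g t + c) has_field_derivative D) (at z) \<longleftrightarrow> (g has_field_derivative D) (at z)" for D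
  proof
    assume "((\<lambda>t. g t + c) has_field_derivative D) (at z)"
    from DERIV_add[OF this DERIV_const[of "-c"]] show "(g has_field_derivative D) (at z)" by simp
  next
    assume "(g has_field_derivative D) (at z)"
    from DERIV_add[OF this DERIV_const[of "c"]] show "((\<lambda>t. g t + c) has_field_derivative D) (at z)" by simp
  qed
  then show ?thesis unfolding deriv_def by simp
qed

lemma deriv_const': "deriv (\<lambda>t. c) z = (0::complex)"
  by (simp add: DERIV_imp_deriv)

lemma line_L: "pLc (\<chi> i. if i = Inl a then t else x $ i) = (\<chi> i. if i = a then t else pLc x $ i)"
  "pRc (\<chi> i. if i = Inl a then t else x $ i) = pRc x"
  by (auto simp: pLc_def pRc_def vec_eq_iff)
lemma line_R: "pRc (\<chi> i. if i = Inr a then t else x $ i) = (\<chi> i. if i = a then t else pRc x $ i)"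
  "pLc (\<chi> i. if i = Inr a then t else x $ i) = pLc x"
  by (auto simp: pLc_def pRc_def vec_eq_iff)
lemma xInl: "x $ Inl a = pLc x $ a" and xInr: "x $ Inr b = pRc x $ b"
  by (auto simp: pLc_def pRc_def)

lemma partial_L: "partial (Inl a) (\<lambda>x. G (pLc x) + H (pRc x)) = (\<lambda>x. partial a G (pLc x))"
  by (rule ext) (simp add: partial_def line_L xInl deriv_add_const)
lemma partial_R: "partial (Inr b) (\<lambda>x. G (pLc x) + H (pRc x)) = (\<lambda>x. partial b H (pRc x))"
  unfolding partial_def line_R xInr
  by (rule ext) (simp add: add.commute[of "G _"] deriv_add_const)
lemma partial_L1: "partial (Inl a) (\<lambda>x. G (pLc x)) = (\<lambda>x. partial a G (pLc x))"
  by (rule ext) (simp add: partial_def line_L xInl)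
lemma partial_R1: "partial (Inr b) (\<lambda>x. H (pRc x)) = (\<lambda>x. partial b H (pRc x))"
  by (rule ext) (simp add: partial_def line_R xInr)
lemma partial_L0: "partial (Inr b) (\<lambda>x. G (pLc x)) = (\<lambda>x. 0)"
  by (rule ext) (simp add: partial_def line_R deriv_const')
lemma partial_R0: "partial (Inl a) (\<lambda>x. H (pRc x)) = (\<lambda>x. 0)"
  by (rule ext) (simp add: partial_def line_L deriv_const')

lemma invertible_ker: "invertible (M :: complex^'n^'n) \<longleftrightarrow> (\<forall>w. M *v w = 0 \<longrightarrow> w = 0)"
  by (simp add: invertible_left_inverse matrix_left_invertible_ker)

lemma block_mult:
  fixes M :: "complex^('n::finite + 'm::finite)^('n + 'm)"
  assumes "\<And>a c. M $ Inl a $ Inl c = A $ a $ c" "\<And>a d. M $ Inl a $ Inr d = 0"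
    "\<And>b c. M $ Inr b $ Inl c = 0" "\<And>b d. M $ Inr b $ Inr d = B $ b $ d"
  shows "pLc (M *v w) = A *v pLc w" "pRc (M *v w) = B *v pRc w"
proof -
  have U: "sum f (UNIV :: ('n + 'm) set) = sum (f o Inl) UNIV + sum (f o Inr) UNIV" for f :: "'n + 'm \<Rightarrow> complex"
    using sum.Plus[of UNIV UNIV f] by simp
  show "pLc (M *v w) = A *v pLc w"
    unfolding vec_eq_iff
    by (simp add: pLc_def matrix_vector_mult_def U assms o_def)
  show "pRc (M *v w) = B *v pRc w"
    unfolding vec_eq_iff
    by (simp add: pRc_def matrix_vector_mult_def U assms o_def)
qed

lemma block_invertible:
  fixes M :: "complex^('n::finite + 'm::finite)^('n + 'm)"
  assumes "\<And>a c. M $ Inl a $ Inl c = A $ a $ c" "\<And>a d. M $ Inl a $ Inr d = 0"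
    "\<And>b c. M $ Inr b $ Inl c = 0" "\<And>b d. M $ Inr b $ Inr d = B $ b $ d"
  shows "invertible M \<longleftrightarrow> invertible A \<and> invertible B"
proof -
  note bm = block_mult[OF assms]
  have z: "pLc (0::complex^('n+'m)) = 0" "pRc (0::complex^('n+'m)) = 0" "joinc 0 0 = (0::complex^('n+'m))"
    by (auto simp: pLc_def pRc_def joinc_def vec_eq_iff split: sum.splits)
  have w0: "w = 0 \<longleftrightarrow> pLc w = 0 \<and> pRc w = 0" for w :: "complex^('n+'m)"
  proof
    assume "pLc w = 0 \<and> pRc w = 0"
    then have "joinc (pLc w) (pRc w) = 0" using z by simp
    then show "w = 0" by (simp add: joinc_eta)
  qed (use z in simp)
  have eq: "M *v w = 0 \<longleftrightarrow> A *v pLc w = 0 \<and> B *v pRc w = 0" for w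
    using w0[of "M *v w"] bm by simp
  show ?thesis unfolding invertible_ker
  proof safe
    fix v assume h: "\<forall>w. M *v w = 0 \<longrightarrow> w = 0" "A *v v = 0"
    have "M *v joinc v 0 = 0" using eq h by simp
    then show "v = 0" using h(1) by (metis joinc_simps(1) z(1))
  next
    fix v assume h: "\<forall>w. M *v w = 0 \<longrightarrow> w = 0" "B *v v = 0"
    have "M *v joinc 0 v = 0" using eq h by simp
    then show "v = 0" using h(1) by (metis joinc_simps(2) z(2))
  next
    fix w assume "\<forall>w. A *v w = 0 \<longrightarrow> w = 0" "\<forall>w. B *v w = 0 \<longrightarrow> w = 0" "M *v w = 0"
    then show "w = 0" using eq w0 by blast
  qed
qed

lemma torus_split: "x \<in> torus \<longleftrightarrow> pLc x \<in> torus \<and> pRc x \<in> torus"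
  by (auto simp: torus_def pLc_def pRc_def) (metis sum.exhaust)

lemma split_crit:
  fixes G :: "complex^'n::finite \<Rightarrow> complex" and H :: "complex^'m::finite \<Rightarrow> complex"
  shows "critical_point (\<lambda>x. G (pLc x) + H (pRc x)) x \<longleftrightarrow> critical_point G (pLc x) \<and> critical_point H (pRc x)"
proof -
  have "(\<forall>j. partial j (\<lambda>x. G (pLc x) + H (pRc x)) x = 0) \<longleftrightarrow> (\<forall>a. partial a G (pLc x) = 0) \<and> (\<forall>b. partial b H (pRc x) = 0)"
  proof safe
    fix a assume "\<forall>j. partial j (\<lambda>x. G (pLc x) + H (pRc x)) x = 0"
    then show "partial a G (pLc x) = 0" using partial_L[of a G H] by metis
  next
    fix b assume "\<forall>j. partial j (\<lambda>x. G (pLc x) + H (pRc x)) x = 0"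
    then show "partial b H (pRc x) = 0" using partial_R[of b G H] by metis
  next
    fix j assume "\<forall>a. partial a G (pLc x) = 0" "\<forall>b. partial b H (pRc x) = 0"
    then show "partial j (\<lambda>x. G (pLc x) + H (pRc x)) x = 0"
      by (cases j) (simp_all add: partial_L partial_R)
  qed
  note P = this
  show ?thesis unfolding critical_point_def torus_split[of x] using P by argo
qed

lemma split_hess:
  fixes G :: "complex^'n::finite \<Rightarrow> complex" and H :: "complex^'m::finite \<Rightarrow> complex"
  shows "invertible (hessian (\<lambda>x. G (pLc x) + H (pRc x)) x) \<longleftrightarrow> invertible (hessian G (pLc x)) \<and> invertible (hessian H (pRc x))"
proof (rule block_invertible)
  have FL: "partial (Inl c) (\<lambda>x. G (pLc x) + H (pRc x)) = (\<lambda>x. partial c G (pLc x))" for c by (rule partial_L)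
  have FR: "partial (Inr d) (\<lambda>x. G (pLc x) + H (pRc x)) = (\<lambda>x. partial d H (pRc x))" for d by (rule partial_R)
  show "hessian (\<lambda>x. G (pLc x) + H (pRc x)) x $ Inl a $ Inl c = hessian G (pLc x) $ a $ c" for a c
    unfolding hessian_def vec_lambda_beta FL partial_L1 ..
  show "hessian (\<lambda>x. G (pLc x) + H (pRc x)) x $ Inl a $ Inr d = 0" for a d
    unfolding hessian_def vec_lambda_beta FR partial_R0 ..
  show "hessian (\<lambda>x. G (pLc x) + H (pRc x)) x $ Inr b $ Inl c = 0" for b c
    unfolding hessian_def vec_lambda_beta FL partial_L0 ..
  show "hessian (\<lambda>x. G (pLc x) + H (pRc x)) x $ Inr b $ Inr d = hessian H (pRc x) $ b $ d" for b d
    unfolding hessian_def vec_lambda_beta FR partial_R1 ..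
qed



definition mono :: "int^'n::finite \<Rightarrow> complex^'n \<Rightarrow> complex" where
  "mono k x = (\<Prod>i\<in>UNIV. (x $ i) powi (k $ i))"

lemma prod_sum_type:
  fixes f :: "'n::finite + 'm::finite \<Rightarrow> complex"
  shows "prod f UNIV = prod (f o Inl) UNIV * prod (f o Inr) UNIV"
  using prod.Plus[of UNIV UNIV f] by simp

lemma mono_inl: "mono (inlk k :: int^('n::finite + 'm::finite)) x = mono k (pLc x)"
  by (simp add: mono_def prod_sum_type o_def inlk_def pLc_def)
lemma mono_inr: "mono (inrk k :: int^('n::finite + 'm::finite)) x = mono k (pRc x)"
  by (simp add: mono_def prod_sum_type o_def inrk_def pRc_def)

lemma finite_Kset:
  assumes "smooth_fano_polytope (Q :: (real^'n) set)"
  shows "finite {k. lat k extreme_point_of Q}"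
proof -
  have "finite {v. v extreme_point_of Q}"
    using sfp_facts(4)[OF assms] by (intro finite_polyhedron_extreme_points polytope_imp_polyhedron)
  then have "finite (lat -` {v. v extreme_point_of Q})"
    by (rule finite_vimageI) (auto simp: inj_def lat_inj)
  then show ?thesis by (simp add: vimage_def)
qed

lemma W_split:
  fixes Q :: "(real^'n) set" and Q' :: "(real^'m) set"
  assumes "smooth_fano_polytope Q" "smooth_fano_polytope Q'"
  shows "superpotential (conv_join Q Q') = (\<lambda>x. superpotential Q (pLc x) + superpotential Q' (pRc x))"
proof
  fix x :: "complex^('n+'m)"
  let ?K1 = "{k. lat k extreme_point_of Q}" and ?K2 = "{k. lat k extreme_point_of Q'}"
  have disj: "inlk ` ?K1 \<inter> (inrk ` ?K2 :: (int^('n+'m)) set) = {}"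
  proof (rule ccontr)
    assume "inlk ` ?K1 \<inter> (inrk ` ?K2 :: (int^('n+'m)) set) \<noteq> {}"
    then obtain k k' where k: "k \<in> ?K1" "k' \<in> ?K2" "(inlk k :: int^('n+'m)) = inrk k'" by blast
    then have "k = 0"
      by (auto simp: vec_eq_iff inlk_def inrk_def) (metis sum.case(1) sum.case(2) vec_lambda_beta)
    then have "lat k = 0" by (simp add: lat_def vec_eq_iff)
    then show False using k sfp_facts(3)[OF assms(1)] by simp
  qed
  have "superpotential (conv_join Q Q') x = (\<Sum>k\<in>inlk ` ?K1 \<union> inrk ` ?K2. mono k x)"
    unfolding superpotential_def Kset_P[OF assms] mono_def ..
  also have "\<dots> = (\<Sum>k\<in>inlk ` ?K1. mono k x) + (\<Sum>k\<in>inrk ` ?K2. mono k x)"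
    using disj finite_Kset[OF assms(1)] finite_Kset[OF assms(2)] by (intro sum.union_disjoint) auto
  also have "(\<Sum>k\<in>inlk ` ?K1. mono k x) = superpotential Q (pLc x)"
  proof -
    have "(\<Sum>k\<in>inlk ` ?K1. mono k x) = (\<Sum>k\<in>?K1. mono (inlk k :: int^('n+'m)) x)"
      by (rule sum.reindex_cong[where l=inlk]) (auto simp: inj_on_def inj_inlk[THEN injD])
    then show ?thesis by (simp only: mono_inl) (simp add: superpotential_def mono_def)
  qed
  also have "(\<Sum>k\<in>inrk ` ?K2. mono k x) = superpotential Q' (pRc x)"
  proof -
    have "(\<Sum>k\<in>inrk ` ?K2. mono k x) = (\<Sum>k\<in>?K2. mono (inrk k :: int^('n+'m)) x)"
      by (rule sum.reindex_cong[where l=inrk]) (auto simp: inj_on_def inj_inrk[THEN injD])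
    then show ?thesis by (simp only: mono_inr) (simp add: superpotential_def mono_def)
  qed
  finally show "superpotential (conv_join Q Q') x = superpotential Q (pLc x) + superpotential Q' (pRc x)" .
qed




lemma mono_line:
  fixes x :: "complex^'n::finite"
  shows "mono k (\<chi> i. if i = j then t else x $ i) = t powi (k $ j) * (\<Prod>i\<in>UNIV - {j}. x $ i powi k $ i)"
proof -
  have "mono k (\<chi> i. if i = j then t else x $ i) =
      t powi (k $ j) * (\<Prod>i\<in>UNIV - {j}. (\<chi> i. if i = j then t else x $ i) $ i powi k $ i)"
    unfolding mono_def by (subst prod.remove[of UNIV j]) auto
  also have "(\<Prod>i\<in>UNIV - {j}. (\<chi> i. if i = j then t else x $ i) $ i powi k $ i) = (\<Prod>i\<in>UNIV - {j}. x $ i powi k $ i)"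
    by (rule prod.cong) auto
  finally show ?thesis .
qed

lemma partial_W:
  fixes x :: "complex^'n::finite"
  assumes "x \<in> torus"
  shows "x $ j * partial j (\<lambda>x. \<Sum>k\<in>K. mono k x) x = (\<Sum>k\<in>K. of_int (k $ j) * mono k x)"
proof -
  define c where "c k = (\<Prod>i\<in>UNIV - {j}. x $ i powi k $ i)" for k
  have xj: "x $ j \<noteq> 0" using assms by (simp add: torus_def)
  have xeq: "(\<chi> i. if i = j then x $ j else x $ i) = x" by (simp add: vec_eq_iff)
  have mx: "mono k x = x $ j powi (k $ j) * c k" for k
    using mono_line[of k j "x $ j" x] unfolding xeq c_def .
  have fl: "(\<lambda>t. \<Sum>k\<in>K. mono k (\<chi> i. if i = j then t else x $ i)) = (\<lambda>t. \<Sum>k\<in>K. t powi (k $ j) * c k)"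
    by (simp add: mono_line c_def)
  have D: "((\<lambda>t. \<Sum>k\<in>K. t powi (k $ j) * c k) has_field_derivative
      (\<Sum>k\<in>K. of_int (k $ j) * x $ j powi (k $ j - 1) * 1 * c k)) (at (x $ j))"
    by (intro DERIV_sum DERIV_cmult_right DERIV_power_int DERIV_ident) (use xj in auto)
  have "partial j (\<lambda>x. \<Sum>k\<in>K. mono k x) x = (\<Sum>k\<in>K. of_int (k $ j) * x $ j powi (k $ j - 1) * 1 * c k)"
    unfolding partial_def fl using D by (rule DERIV_imp_deriv)
  then have "x $ j * partial j (\<lambda>x. \<Sum>k\<in>K. mono k x) x = (\<Sum>k\<in>K. of_int (k $ j) * (x $ j * x $ j powi (k $ j - 1)) * c k)"
    by (simp add: sum_distrib_left algebra_simps)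
  also have "\<dots> = (\<Sum>k\<in>K. of_int (k $ j) * mono k x)"
    using xj by (simp add: mx power_int_diff mult.assoc)
  finally show ?thesis .
qed




lemma W_mono: "superpotential R = (\<lambda>x. \<Sum>k\<in>{k. lat k extreme_point_of R}. mono k x)"
  by (simp add: superpotential_def mono_def fun_eq_iff)

lemma exists_crit:
  assumes sfp: "smooth_fano_polytope (Q :: (real^'n) set)"
  shows "\<exists>y. critical_point (superpotential Q) y"
proof -
  define K where "K = {k. lat k extreme_point_of Q}"
  have fin: "finite K" unfolding K_def by (rule finite_Kset[OF sfp])
  note sf = sfp_facts[OF sfp]
  have ext: "{x. x extreme_point_of Q} = lat ` K"
    using sf(6) by (auto simp: K_def)
  have QK: "Q = convex hull (lat ` K)"
    using Krein_Milman_Minkowski[OF polytope_imp_compact[OF sf(4)] sf(1)] ext by simp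
  obtain e where e: "e > 0" "ball 0 e \<subseteq> Q" using sf(5) mem_interior by blast
  have Kne: "K \<noteq> {}" using QK sf(2) by auto
  define f where "f u = (\<Sum>k\<in>K. exp (lat k \<bullet> u))" for u :: "real^'n"
  have bound: "exp ((e/2) * norm u) \<le> f u" for u
  proof -
    define M where "M = Max ((\<lambda>k. lat k \<bullet> u) ` K)"
    have "M \<in> (\<lambda>k. lat k \<bullet> u) ` K" unfolding M_def using fin Kne by (intro Max_in) auto
    then obtain k0 where k0: "k0 \<in> K" "lat k0 \<bullet> u = M" by auto
    have sub: "lat ` K \<subseteq> {z. inner u z \<le> M}"
      using fin by (auto simp: M_def inner_commute)
    have QM: "Q \<subseteq> {z. inner u z \<le> M}"
      unfolding QK by (rule hull_minimal[where S=convex, OF sub convex_halfspace_le[of u M]])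
    have "(e/2) * norm u \<le> M"
    proof (cases "u = 0")
      case True then show ?thesis using k0 by simp
    next
      case False
      define w where "w = (e / (2 * norm u)) *\<^sub>R u"
      have "norm w = e / 2" using False e by (simp add: w_def)
      then have "w \<in> Q" using e by (auto simp: dist_norm)
      then have "inner u w \<le> M" using QM by auto
      moreover have "inner u w = (e/2) * norm u"
        using False by (simp add: w_def power2_norm_eq_inner[symmetric] power2_eq_square)
      ultimately show ?thesis by simp
    qed
    then have "exp ((e/2) * norm u) \<le> exp (lat k0 \<bullet> u)" using k0 by simp
    also have "\<dots> \<le> f u" unfolding f_def using fin k0 by (intro member_le_sum) auto
    finally show ?thesis .
  qed
  define R where "R = 2 * f 0 / e"
  have f0: "f 0 \<ge> 0" unfolding f_def by (intro sum_nonneg) auto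
  then have R0: "R \<ge> 0" using e by (simp add: R_def)
  have cont: "continuous_on (cball 0 R) f" unfolding f_def by (intro continuous_intros)
  obtain u0 where u0: "u0 \<in> cball 0 R" "\<forall>y\<in>cball 0 R. f u0 \<le> f y"
    using continuous_attains_inf[OF compact_cball _ cont] R0 by fastforce
  have glob: "f u0 \<le> f y" for y
  proof (cases "norm y \<le> R")
    case True then show ?thesis using u0 by auto
  next
    case False
    have "f u0 \<le> f 0" using u0 R0 by auto
    also have "f 0 < exp (f 0)" using exp_ge_add_one_self[of "f 0"] by linarith
    also have "exp (f 0) \<le> exp ((e/2) * norm y)"
      using False e by (simp add: R_def field_simps)
    also have "\<dots> \<le> f y" by (rule bound)
    finally show ?thesis by simp
  qed
  have grad: "(\<Sum>k\<in>K. of_int (k $ j) * exp (lat k \<bullet> u0)) = 0" for j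
  proof -
    have inn: "lat k \<bullet> (u0 + t *\<^sub>R axis j 1) = lat k \<bullet> u0 + t * of_int (k $ j)" for k t
      by (simp add: inner_add_right inner_axis lat_def)
    have gdef: "f (u0 + t *\<^sub>R axis j 1) = (\<Sum>k\<in>K. exp (lat k \<bullet> u0 + t * of_int (k $ j)))" for t
      unfolding f_def inn ..
    have D: "((\<lambda>t. \<Sum>k\<in>K. exp (lat k \<bullet> u0 + t * of_int (k $ j))) has_real_derivative
       (\<Sum>k\<in>K. exp (lat k \<bullet> u0) * of_int (k $ j))) (at 0)"
      by (intro DERIV_sum) (auto intro!: derivative_eq_intros)
    have "(\<Sum>k\<in>K. exp (lat k \<bullet> u0) * of_int (k $ j)) = 0"
    proof (rule DERIV_local_min[OF D, of 1])
      show "\<forall>y. \<bar>0 - y\<bar> < 1 \<longrightarrow> (\<Sum>k\<in>K. exp (lat k \<bullet> u0 + 0 * of_int (k $ j))) \<le>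
                 (\<Sum>k\<in>K. exp (lat k \<bullet> u0 + y * of_int (k $ j)))"
        using glob gdef by (metis add_0_right scale_zero_left)
    qed simp
    then show ?thesis by (simp add: mult.commute)
  qed
  define y where "y = (\<chi> i. complex_of_real (exp (u0 $ i)))"
  have ytor: "y \<in> torus" by (simp add: torus_def y_def)
  have innr: "lat k \<bullet> u0 = (\<Sum>i\<in>UNIV. of_int (k $ i) * u0 $ i)" for k
    by (simp add: inner_vec_def lat_def)
  have my: "mono k y = complex_of_real (exp (lat k \<bullet> u0))" for k
  proof -
    have "mono k y = (\<Prod>i\<in>UNIV. exp (complex_of_real (of_int (k $ i) * u0 $ i)))"
      unfolding mono_def y_def by (simp add: exp_of_real[symmetric] exp_power_int)
    also have "\<dots> = exp (\<Sum>i\<in>UNIV. complex_of_real (of_int (k $ i) * u0 $ i))"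
      by (simp add: exp_sum)
    also have "(\<Sum>i\<in>UNIV. complex_of_real (of_int (k $ i) * u0 $ i)) = complex_of_real (lat k \<bullet> u0)"
      unfolding innr of_real_sum ..
    also have "exp (complex_of_real (lat k \<bullet> u0)) = complex_of_real (exp (lat k \<bullet> u0))"
      by (rule exp_of_real)
    finally show ?thesis .
  qed
  have "critical_point (superpotential Q) y"
    unfolding critical_point_def
  proof (intro conjI allI ytor)
    fix j
    have "y $ j * partial j (superpotential Q) y = (\<Sum>k\<in>K. of_int (k $ j) * mono k y)"
      unfolding W_mono K_def[symmetric] by (rule partial_W[OF ytor])
    also have "\<dots> = complex_of_real (\<Sum>k\<in>K. of_int (k $ j) * exp (lat k \<bullet> u0))"
      by (simp add: my)
    also have "\<dots> = 0" by (simp add: grad)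
    finally show "partial j (superpotential Q) y = 0" using ytor by (simp add: torus_def)
  qed
  then show ?thesis by blast
qed



theorem mainTheorem3:
  fixes Q :: "(real^'n) set" and Q' :: "(real^'m) set"
  assumes "smooth_fano_polytope Q" and "smooth_fano_polytope Q'"
  shows "(\<forall>x. critical_point (superpotential (conv_join Q Q')) x \<longrightarrow>
              nondegenerate_critical_point (superpotential (conv_join Q Q')) x)
         \<longleftrightarrow>
         (\<forall>y. critical_point (superpotential Q) y \<longrightarrow>
              nondegenerate_critical_point (superpotential Q) y) \<and>
         (\<forall>z. critical_point (superpotential Q') z \<longrightarrow>
              nondegenerate_critical_point (superpotential Q') z)"
proof -
  note Wsp = W_split[OF assms]
  have crit: "critical_point (superpotential (conv_join Q Q')) x \<longleftrightarrow>
      critical_point (superpotential Q) (pLc x) \<and> critical_point (superpotential Q') (pRc x)" for x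
    unfolding Wsp by (rule split_crit)
  have hess: "invertible (hessian (superpotential (conv_join Q Q')) x) \<longleftrightarrow>
      invertible (hessian (superpotential Q) (pLc x)) \<and> invertible (hessian (superpotential Q') (pRc x))" for x
    unfolding Wsp by (rule split_hess)
  obtain y0 where y0: "critical_point (superpotential Q) y0" using exists_crit[OF assms(1)] by blast
  obtain z0 where z0: "critical_point (superpotential Q') z0" using exists_crit[OF assms(2)] by blast
  have fwd1: "critical_point (superpotential Q) y \<and> invertible (hessian (superpotential Q) y)"
    if H: "\<forall>x. critical_point (superpotential (conv_join Q Q')) x \<longrightarrow> nondegenerate_critical_point (superpotential (conv_join Q Q')) x"
      and y: "critical_point (superpotential Q) y" for y
  proof -
    have "critical_point (superpotential (conv_join Q Q')) (joinc y z0)" using crit y z0 by simp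
    then have "invertible (hessian (superpotential (conv_join Q Q')) (joinc y z0))"
      using H unfolding nondegenerate_critical_point_def by blast
    then show ?thesis using hess y by (metis joinc_simps(1))
  qed
  have fwd2: "critical_point (superpotential Q') z \<and> invertible (hessian (superpotential Q') z)"
    if H: "\<forall>x. critical_point (superpotential (conv_join Q Q')) x \<longrightarrow> nondegenerate_critical_point (superpotential (conv_join Q Q')) x"
      and z: "critical_point (superpotential Q') z" for z
  proof -
    have "critical_point (superpotential (conv_join Q Q')) (joinc y0 z)" using crit y0 z by simp
    then have "invertible (hessian (superpotential (conv_join Q Q')) (joinc y0 z))"
      using H unfolding nondegenerate_critical_point_def by blast
    then show ?thesis using hess z by (metis joinc_simps(2))
  qed
  show ?thesis
  proof (rule iffI)
    assume H: "\<forall>x. critical_point (superpotential (conv_join Q Q')) x \<longrightarrow> nondegenerate_critical_point (superpotential (conv_join Q Q')) x"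
    show "(\<forall>y. critical_point (superpotential Q) y \<longrightarrow> nondegenerate_critical_point (superpotential Q) y) \<and>
         (\<forall>z. critical_point (superpotential Q') z \<longrightarrow> nondegenerate_critical_point (superpotential Q') z)"
      unfolding nondegenerate_critical_point_def using fwd1[OF H] fwd2[OF H] by blast
  next
    assume H: "(\<forall>y. critical_point (superpotential Q) y \<longrightarrow> nondegenerate_critical_point (superpotential Q) y) \<and>
         (\<forall>z. critical_point (superpotential Q') z \<longrightarrow> nondegenerate_critical_point (superpotential Q') z)"
    show "\<forall>x. critical_point (superpotential (conv_join Q Q')) x \<longrightarrow> nondegenerate_critical_point (superpotential (conv_join Q Q')) x"
      using H crit hess unfolding nondegenerate_critical_point_def by blast
  qed
qed


end
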